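(* Let $G$ be a graph with at least one edge such that the subgraph of $G$ induced by all vertices of degree at least $3$ is a forest. Then $\chi_s'(G) \le 4\Delta(G) - 3$.
   Context: All graphs are finite and simple; $\Delta(G)$ is the maximum degree. A strong edge coloring of $G$ is an assignment of colors to the edges of $G$ such that every path with three edges receives three distinct colors; equivalently, any two distinct edges that share an endpoint, or whose endpoints are joined by an edge, receive different colors. The strong chromatic index $\chi_s'(G)$ is the minimum number of colors in a strong edge coloring of $G$. *)

theory Defs
  imports Main
begin

definition simple_graph :: "'a set \<Rightarrow> 'a set set \<Rightarrow> bool" where
  "simple_graph V E \<longleftrightarrow> finite V \<and> (\<forall>e\<in>E. e \<subseteq> V \<and> card e = 2)"

definition degree :: "'a set set \<Rightarrow> 'a \<Rightarrow> nat" where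
  "degree E v = card {e\<in>E. v \<in> e}"

definition max_degree :: "'a set \<Rightarrow> 'a set set \<Rightarrow> nat" where
  "max_degree V E = Max (degree E ` V)"

definition induced_edges :: "'a set set \<Rightarrow> 'a set \<Rightarrow> 'a set set" where
  "induced_edges E S = {e\<in>E. e \<subseteq> S}"

definition is_cycle :: "'a set \<Rightarrow> 'a set set \<Rightarrow> 'a list \<Rightarrow> bool" where
  "is_cycle V E vs \<longleftrightarrow> length vs \<ge> 3 \<and> distinct vs \<and> set vs \<subseteq> V \<and>
     (\<forall>i < length vs. {vs ! i, vs ! ((i + 1) mod length vs)} \<in> E)"

definition forest :: "'a set \<Rightarrow> 'a set set \<Rightarrow> bool" where
  "forest V E \<longleftrightarrow> \<not> (\<exists>vs. is_cycle V E vs)"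

definition strong_edge_coloring :: "'a set set \<Rightarrow> ('a set \<Rightarrow> 'c) \<Rightarrow> bool" where
  "strong_edge_coloring E c \<longleftrightarrow>
     (\<forall>e\<in>E. \<forall>f\<in>E. e \<noteq> f \<and> (e \<inter> f \<noteq> {} \<or> (\<exists>u\<in>e. \<exists>w\<in>f. {u, w} \<in> E)) \<longrightarrow> c e \<noteq> c f)"

definition strong_chromatic_index :: "'a set set \<Rightarrow> nat" where
  "strong_chromatic_index E = (LEAST k. \<exists>c :: 'a set \<Rightarrow> nat. strong_edge_coloring E c \<and> card (c ` E) = k)"

end

theory Submission imports Defs begin

lemma card2_mem: "card f = 2 \<Longrightarrow> x \<in> f \<Longrightarrow> \<exists>y. y \<noteq> x \<and> f = {x, y}"
  by (auto simp: card_2_iff) 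

locale sg =
  fixes V :: "'a set" and E :: "'a set set"
  assumes sg: "simple_graph V E"
begin

lemma finV: "finite V" using sg by (simp add: simple_graph_def)
lemma edge_sub: "e \<in> E \<Longrightarrow> e \<subseteq> V" using sg by (simp add: simple_graph_def)
lemma edge_card: "e \<in> E \<Longrightarrow> card e = 2" using sg by (simp add: simple_graph_def)
lemma finE: "finite E"
proof -
  have "E \<subseteq> Pow V" using edge_sub by blast
  then show ?thesis using finV by (simp add: finite_subset)
qed
lemma edge_ne: "{x, y} \<in> E \<Longrightarrow> x \<noteq> y"
proof
  assume "{x, y} \<in> E" "x = y"
  then have "card {x, y} = 2" using edge_card by blast
  with \<open>x = y\<close> show False by simp
qed
lemma edge_V: "{x, y} \<in> E \<Longrightarrow> x \<in> V \<and> y \<in> V"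
  using edge_sub by blast

definition nb :: "'a \<Rightarrow> 'a set" where "nb x = {y. {x, y} \<in> E}"

lemma nb_sub: "nb x \<subseteq> V"
proof
  fix y assume "y \<in> nb x"
  then have "{x, y} \<in> E" by (simp add: nb_def)
  then show "y \<in> V" using edge_V by blast
qed

lemma nb_fin: "finite (nb x)"
  using nb_sub finV by (rule finite_subset)

lemma nb_card: "card (nb x) = degree E x"
proof -
  have "bij_betw (\<lambda>y. {x, y}) (nb x) {f\<in>E. x \<in> f}"
  proof (rule bij_betwI')
    fix y z assume "y \<in> nb x" "z \<in> nb x"
    then have "{x, y} \<in> E" "{x, z} \<in> E" by (simp_all add: nb_def)
    then have "y \<noteq> x" "z \<noteq> x" using edge_ne by blast+
    show "({x, y} = {x, z}) = (y = z)"
    proof (intro iffI)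
      assume "{x, y} = {x, z}"
      then have "y \<in> {x, z}" by blast
      then show "y = z" using \<open>y \<noteq> x\<close> by blast
    qed simp
  next
    fix y assume "y \<in> nb x" then show "{x, y} \<in> {f \<in> E. x \<in> f}" by (simp add: nb_def)
  next
    fix f assume f: "f \<in> {f \<in> E. x \<in> f}"
    then have c2: "card f = 2" and xf: "x \<in> f" using edge_card by auto
    obtain y where "f = {x, y}" using card2_mem[OF c2 xf] by blast
    then show "\<exists>y\<in>nb x. f = {x, y}" using f by (auto simp: nb_def)
  qed
  then have "card (nb x) = card {f\<in>E. x \<in> f}" by (rule bij_betw_same_card)
  then show ?thesis unfolding degree_def .
qed

lemma deg_le: "degree E x \<le> max_degree V E"
proof (cases "x \<in> V")
  case True show ?thesis unfolding max_degree_def by (intro Max_ge) (simp_all add: finV True)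
next
  case False
  have "{e\<in>E. x \<in> e} = {}"
  proof (rule ccontr)
    assume "{e\<in>E. x \<in> e} \<noteq> {}"
    then obtain e where "e \<in> E" "x \<in> e" by blast
    then show False using edge_sub False by blast
  qed
  then have "degree E x = card ({}::'a set set)" unfolding degree_def by (rule arg_cong[where f=card])
  then show ?thesis by simp
qed

lemma forest_sub: "W \<subseteq> X \<Longrightarrow> forest X (induced_edges E X) \<Longrightarrow> forest W (induced_edges E W)"
  unfolding forest_def
proof (rule notI, elim exE)
  fix vs assume "W \<subseteq> X" "\<not> (\<exists>vs. is_cycle X (induced_edges E X) vs)" "is_cycle W (induced_edges E W) vs"
  then have "is_cycle X (induced_edges E X) vs"
    unfolding is_cycle_def induced_edges_def by auto
  then show False using \<open>\<not> _\<close> by blast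
qed

lemma forest_leaf:
  assumes fW: "finite W" and ne: "W \<noteq> {}" and fo: "forest W (induced_edges E W)"
  shows "\<exists>x\<in>W. card {y\<in>W. {x, y} \<in> E} \<le> 1"
proof (rule ccontr)
  assume "\<not> ?thesis"
  then have deg2: "\<And>x. x \<in> W \<Longrightarrow> card {y\<in>W. {x, y} \<in> E} \<ge> 2" by force
  define P where "P = {xs. xs \<noteq> [] \<and> distinct xs \<and> set xs \<subseteq> W \<and> (\<forall>i. Suc i < length xs \<longrightarrow> {xs!i, xs!Suc i} \<in> E)}"
  have "P \<subseteq> {xs. set xs \<subseteq> W \<and> length xs \<le> card W}"
    unfolding P_def using fW by (auto simp: distinct_card[symmetric] intro: card_mono)
  then have finP: "finite P" using finite_lists_length_le[OF fW] finite_subset by blast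
  obtain w where "w \<in> W" using ne by blast
  then have "[w] \<in> P" by (auto simp: P_def)
  then have Pne: "P \<noteq> {}" by blast
  define m where "m = Max (length ` P)"
  have "m \<in> length ` P" unfolding m_def using finP Pne by simp
  then obtain xs where xsP: "xs \<in> P" and lm: "length xs = m" by blast
  have mx: "\<And>ys. ys \<in> P \<Longrightarrow> length ys \<le> m" unfolding m_def using finP by simp
  have xs: "xs \<noteq> []" "distinct xs" "set xs \<subseteq> W" "\<And>i. Suc i < length xs \<Longrightarrow> {xs!i, xs!Suc i} \<in> E"
    using xsP by (auto simp: P_def)
  define x0 where "x0 = xs ! 0"
  have x0W: "x0 \<in> W" using xs unfolding x0_def by (simp add: subset_iff)
  let ?N = "{y\<in>W. {x0, y} \<in> E}"
  have "?N - {xs!1} \<noteq> {}"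
  proof
    assume "?N - {xs!1} = {}"
    then have "?N \<subseteq> {xs!1}" by blast
    then have "card ?N \<le> card {xs!1}" by (intro card_mono) simp_all
    then have "card ?N \<le> 1" by simp
    with deg2[OF x0W] show False by simp
  qed
  then obtain y where yW: "y \<in> W" and ye: "{x0, y} \<in> E" and y1: "y \<noteq> xs!1" by blast
  have yx0: "y \<noteq> x0" using edge_ne[OF ye] by simp
  show False
  proof (cases "y \<in> set xs")
    case False
    have "y # xs \<in> P" unfolding P_def
    proof (intro CollectI conjI allI impI)
      fix i assume i: "Suc i < length (y # xs)"
      show "{(y # xs) ! i, (y # xs) ! Suc i} \<in> E"
      proof (cases i)
        case 0 then show ?thesis using ye by (simp add: x0_def insert_commute)
      next
        case (Suc j) then show ?thesis using xs(4) i by simp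
      qed
    qed (use False xs yW in auto)
    then have "length (y # xs) \<le> m" by (rule mx)
    with lm show False by simp
  next
    case True
    then obtain j where j: "j < length xs" "xs ! j = y" by (auto simp: in_set_conv_nth)
    have "j \<noteq> 0"
    proof
      assume "j = 0" then show False using j yx0 x0_def by simp
    qed
    moreover have "j \<noteq> 1" using j y1 by auto
    ultimately have j2: "j \<ge> 2" by simp
    define vs where "vs = take (Suc j) xs"
    have lvs: "length vs = Suc j" using j by (simp add: vs_def)
    have setvs: "set vs \<subseteq> W" unfolding vs_def by (rule order_trans[OF set_take_subset xs(3)])
    have "is_cycle W (induced_edges E W) vs"
      unfolding is_cycle_def
    proof (intro conjI allI impI)
      show "3 \<le> length vs" using lvs j2 by simp
      show "distinct vs" using xs(2) by (simp add: vs_def)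
      show "set vs \<subseteq> W" by (rule setvs)
      fix i assume i: "i < length vs"
      have inW: "vs ! i \<in> W" "vs ! ((i + 1) mod length vs) \<in> W"
        using setvs i lvs by (auto simp: subset_iff)
      have "{vs ! i, vs ! ((i + 1) mod length vs)} \<in> E"
      proof (cases "i < j")
        case True
        then have "(i + 1) mod length vs = Suc i" using lvs by simp
        then show ?thesis using True xs(4)[of i] j lvs by (simp add: vs_def)
      next
        case False
        then have "i = j" using i lvs by simp
        then show ?thesis using ye j lvs by (simp add: vs_def x0_def insert_commute)
      qed
      then show "{vs ! i, vs ! ((i + 1) mod length vs)} \<in> induced_edges E W"
        using inW by (simp add: induced_edges_def)
    qed
    with fo show False by (auto simp: forest_def)
  qed
qed


definition conf :: "'a set \<Rightarrow> 'a set \<Rightarrow> bool" where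
  "conf e f \<longleftrightarrow> e \<inter> f \<noteq> {} \<or> (\<exists>u\<in>e. \<exists>w\<in>f. {u, w} \<in> E)"

definition Fx :: "'a set set \<Rightarrow> 'a \<Rightarrow> 'a set set" where "Fx F x = {f\<in>F. x \<in> f}"

lemma nb_iff: "y \<in> nb x \<longleftrightarrow> {x, y} \<in> E" by (simp add: nb_def)

lemma L2:
  assumes e: "{u, v} \<in> E" and f: "f \<in> E" and ne: "f \<noteq> {u, v}" and c: "conf {u, v} f"
  shows "\<exists>x\<in>f. x \<in> (nb u - {v}) \<union> (nb v - {u})"
proof (cases "u \<in> f")
  case True
  obtain z where z: "z \<noteq> u" "f = {u, z}" using card2_mem[OF edge_card[OF f] True] by blast
  have "z \<noteq> v" using z ne by blast
  moreover have "z \<in> nb u" using f z by (simp add: nb_iff)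
  ultimately show ?thesis using z by blast
next
  case uf: False
  show ?thesis
  proof (cases "v \<in> f")
    case True
    obtain z where z: "z \<noteq> v" "f = {v, z}" using card2_mem[OF edge_card[OF f] True] by blast
    have "z \<noteq> u" using z ne by blast
    moreover have "z \<in> nb v" using f z by (simp add: nb_iff)
    ultimately show ?thesis using z by blast
  next
    case vf: False
    then have "{u, v} \<inter> f = {}" using uf by blast
    then obtain a w where a: "a \<in> {u, v}" and w: "w \<in> f" and aw: "{a, w} \<in> E"
      using c unfolding conf_def by blast
    have "w \<noteq> u" "w \<noteq> v" using w uf vf by blast+
    show ?thesis
    proof (cases "a = u")
      case True
      then have "w \<in> nb u - {v}" using aw \<open>w \<noteq> v\<close> by (simp add: nb_iff)
      then show ?thesis using w by blast
    next
      case False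
      then have "a = v" using a by blast
      then have "w \<in> nb v - {u}" using aw \<open>w \<noteq> u\<close> by (simp add: nb_iff)
      then show ?thesis using w by blast
    qed
  qed
qed

lemma Fx_fin: "F \<subseteq> E \<Longrightarrow> finite (Fx F x)"
  unfolding Fx_def using finE by (rule finite_subset[rotated]) blast

lemma Fx_card: "F \<subseteq> E \<Longrightarrow> card (Fx F x) \<le> degree E x"
  unfolding Fx_def degree_def by (rule card_mono) (use finE in auto)

lemma C_card:
  assumes F: "F \<subseteq> E" and e: "{u, v} \<in> E"
  shows "card {f\<in>F. f \<noteq> {u, v} \<and> conf {u, v} f}
     \<le> (\<Sum>x\<in>nb u - {v}. card (Fx F x)) + (\<Sum>x\<in>nb v - {u}. card (Fx F x))"
proof -
  have sub: "{f\<in>F. f \<noteq> {u, v} \<and> conf {u, v} f} \<subseteq> (\<Union>x\<in>nb u - {v}. Fx F x) \<union> (\<Union>x\<in>nb v - {u}. Fx F x)"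
  proof
    fix f assume "f \<in> {f\<in>F. f \<noteq> {u, v} \<and> conf {u, v} f}"
    then have "f \<in> F" "f \<noteq> {u, v}" "conf {u, v} f" by auto
    then obtain x where "x \<in> f" "x \<in> (nb u - {v}) \<union> (nb v - {u})" using L2[OF e] F by blast
    then show "f \<in> (\<Union>x\<in>nb u - {v}. Fx F x) \<union> (\<Union>x\<in>nb v - {u}. Fx F x)"
      using \<open>f \<in> F\<close> unfolding Fx_def by blast
  qed
  have fin1: "finite (nb u - {v})" "finite (nb v - {u})" using nb_fin by auto
  have fin2: "finite ((\<Union>x\<in>nb u - {v}. Fx F x) \<union> (\<Union>x\<in>nb v - {u}. Fx F x))"
    using fin1 Fx_fin[OF F] by simp
  have "card {f\<in>F. f \<noteq> {u, v} \<and> conf {u, v} f} \<le> card ((\<Union>x\<in>nb u - {v}. Fx F x) \<union> (\<Union>x\<in>nb v - {u}. Fx F x))"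
    by (rule card_mono[OF fin2 sub])
  also have "\<dots> \<le> card (\<Union>x\<in>nb u - {v}. Fx F x) + card (\<Union>x\<in>nb v - {u}. Fx F x)"
    by (rule card_Un_le)
  also have "\<dots> \<le> (\<Sum>x\<in>nb u - {v}. card (Fx F x)) + (\<Sum>x\<in>nb v - {u}. card (Fx F x))"
    by (intro add_mono card_UN_le fin1)
  finally show ?thesis .
qed

lemma sum_bound:
  fixes g :: "'b \<Rightarrow> nat"
  assumes "finite A" "\<And>x. x \<in> A \<Longrightarrow> g x \<le> a + (if x \<in> Q then b else 0)"
  shows "sum g A \<le> a * card A + b * card (A \<inter> Q)"
proof -
  have "sum g A \<le> (\<Sum>x\<in>A. a + (if x \<in> Q then b else 0))" by (rule sum_mono) (rule assms(2))
  also have "\<dots> = a * card A + (\<Sum>x\<in>A. if x \<in> Q then b else 0)" by (simp add: sum.distrib)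
  also have "(\<Sum>x\<in>A. if x \<in> Q then b else 0) = (\<Sum>x\<in>A \<inter> Q. b)"
    by (rule sum.inter_restrict[symmetric]) (rule assms(1))
  also have "\<dots> = b * card (A \<inter> Q)" by simp
  finally show ?thesis .
qed

lemma card_nb_minus: "v \<in> nb u \<Longrightarrow> card (nb u - {v}) = degree E u - 1"
  using nb_fin nb_card by (simp add: card_Diff_singleton)


definition H :: "'a set" where "H = {v\<in>V. degree E v \<ge> 3}"

lemma low: "{x, y} \<in> E \<Longrightarrow> x \<notin> H \<Longrightarrow> degree E x \<le> 2"
  using edge_V unfolding H_def by fastforce

lemma sum_le_D:
  assumes F: "F \<subseteq> E" and A: "finite A"
  shows "(\<Sum>x\<in>A. card (Fx F x)) \<le> card A * max_degree V E"
proof -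
  have "(\<Sum>x\<in>A. card (Fx F x)) \<le> (\<Sum>x\<in>A. max_degree V E)"
    by (rule sum_mono) (rule le_trans[OF Fx_card[OF F] deg_le])
  then show ?thesis by simp
qed

lemma case_a:
  assumes F: "F \<subseteq> E" and e: "{u, v} \<in> F" and uH: "u \<notin> H" and vH: "v \<notin> H"
  shows "card {f\<in>F. f \<noteq> {u, v} \<and> conf {u, v} f} \<le> 4 * max_degree V E - 4"
proof -
  define D where "D = max_degree V E"
  have eE: "{u, v} \<in> E" using e F by blast
  have vu: "v \<in> nb u" "u \<in> nb v" using eE by (simp_all add: nb_iff insert_commute)
  have du: "degree E u \<le> 2" using low[OF eE uH] .
  have dv: "degree E v \<le> 2" using low[of v u] eE vH by (simp add: insert_commute)
  define a where "a = card (nb u - {v})"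
  define b where "b = card (nb v - {u})"
  have a: "a \<le> 1" "a \<le> D - 1" using card_nb_minus[OF vu(1)] du deg_le[of u] unfolding a_def D_def by simp_all
  have b: "b \<le> 1" "b \<le> D - 1" using card_nb_minus[OF vu(2)] dv deg_le[of v] unfolding b_def D_def by simp_all
  have s1: "(\<Sum>x\<in>nb u - {v}. card (Fx F x)) \<le> a * D"
    unfolding a_def D_def by (rule sum_le_D[OF F]) (simp add: nb_fin)
  have s2: "(\<Sum>x\<in>nb v - {u}. card (Fx F x)) \<le> b * D"
    unfolding b_def D_def by (rule sum_le_D[OF F]) (simp add: nb_fin)
  have "a * D + b * D \<le> 4 * D - 4"
  proof (cases "D \<le> 1")
    case True then have "a = 0" "b = 0" using a b by simp_all
    then show ?thesis by simp
  next
    case False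
    have "a * D + b * D = (a + b) * D" by (simp add: algebra_simps)
    also have "\<dots> \<le> 2 * D" using a b by (intro mult_right_mono) simp_all
    also have "\<dots> \<le> 4 * D - 4" using False by simp
    finally show ?thesis .
  qed
  then show ?thesis using C_card[OF F eE] s1 s2 unfolding D_def by linarith
qed


definition S :: "'a set set \<Rightarrow> 'a set" where "S F = {x\<in>H. \<exists>f\<in>F. x \<in> f}"
definition Sn :: "'a set set \<Rightarrow> 'a \<Rightarrow> 'a set" where "Sn F x = {y\<in>S F. {x, y} \<in> E}"
definition Lf :: "'a set set \<Rightarrow> 'a set" where "Lf F = {x\<in>S F. card (Sn F x) \<le> 1}"

lemma S_sub_H: "S F \<subseteq> H" unfolding S_def by blast
lemma H_sub_V: "H \<subseteq> V" unfolding H_def by blast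
lemma Sn_fin: "finite (Sn F x)"
  by (rule finite_subset[OF _ finV]) (use S_sub_H H_sub_V in \<open>auto simp: Sn_def\<close>)

lemma card_le1_eq: "finite A \<Longrightarrow> card A \<le> 1 \<Longrightarrow> x \<in> A \<Longrightarrow> y \<in> A \<Longrightarrow> x = y"
  using card_le_Suc0_iff_eq by (metis One_nat_def)

lemma Fx_empty: "x \<in> H \<Longrightarrow> x \<notin> S F \<Longrightarrow> Fx F x = {}"
  unfolding S_def Fx_def by blast

lemma H_deg: "x \<in> H \<Longrightarrow> degree E x \<ge> 3" unfolding H_def by blast

lemma case_b:
  assumes F: "F \<subseteq> E" and e: "{u, v} \<in> F" and uL: "u \<in> Lf F" and vH: "v \<notin> H"
  shows "card {f\<in>F. f \<noteq> {u, v} \<and> conf {u, v} f} \<le> 4 * max_degree V E - 4"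
proof -
  define D where "D = max_degree V E"
  have eE: "{u, v} \<in> E" using e F by blast
  have vu: "v \<in> nb u" "u \<in> nb v" using eE by (simp_all add: nb_iff insert_commute)
  have uS: "u \<in> S F" and cSu: "card (Sn F u) \<le> 1" using uL unfolding Lf_def by blast+
  have "degree E u \<ge> 3" using H_deg uS S_sub_H by blast
  then have D3: "D \<ge> 3" using deg_le[of u] unfolding D_def by linarith
  have dv: "degree E v \<le> 2" using low[of v u] eE vH by (simp add: insert_commute)
  define a where "a = card (nb u - {v})"
  define b where "b = card (nb v - {u})"
  define c where "c = card ((nb u - {v}) \<inter> S F)"
  have a: "a \<le> D - 1" using card_nb_minus[OF vu(1)] deg_le[of u] unfolding a_def D_def by simp
  have b: "b \<le> 1" using card_nb_minus[OF vu(2)] dv unfolding b_def by simp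
  have "(nb u - {v}) \<inter> S F \<subseteq> Sn F u" unfolding Sn_def by (auto simp: nb_iff)
  then have "c \<le> card (Sn F u)" unfolding c_def by (rule card_mono[OF Sn_fin])
  then have c: "c \<le> 1" using cSu by simp
  have s1: "(\<Sum>x\<in>nb u - {v}. card (Fx F x)) \<le> 2 * a + (D - 2) * c"
    unfolding a_def c_def
  proof (rule sum_bound)
    show "finite (nb u - {v})" using nb_fin by simp
    fix x assume x: "x \<in> nb u - {v}"
    show "card (Fx F x) \<le> 2 + (if x \<in> S F then D - 2 else 0)"
    proof (cases "x \<in> S F")
      case True
      have "card (Fx F x) \<le> D" using le_trans[OF Fx_card[OF F] deg_le] unfolding D_def .
      then show ?thesis using True D3 by simp
    next
      case False
      show ?thesis
      proof (cases "x \<in> H")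
        case True then show ?thesis using Fx_empty[OF True False] by simp
      next
        case xH: False
        have "{x, u} \<in> E" using x by (simp add: nb_iff insert_commute)
        then have "degree E x \<le> 2" using low xH by blast
        then show ?thesis using Fx_card[OF F, of x] by simp
      qed
    qed
  qed
  have s2: "(\<Sum>x\<in>nb v - {u}. card (Fx F x)) \<le> b * D"
    unfolding b_def D_def by (rule sum_le_D[OF F]) (simp add: nb_fin)
  have m1: "(D - 2) * c \<le> D - 2" using c by (metis mult.right_neutral mult_le_mono2)
  have m2: "b * D \<le> D" using b by simp
  have "2 * a + (D - 2) * c + b * D \<le> 4 * D - 4" using a m1 m2 D3 by linarith
  then show ?thesis using C_card[OF F eE] s1 s2 unfolding D_def by linarith
qed

lemma Lf_edges:
  assumes F: "F \<subseteq> E" and noB: "\<forall>w\<in>Lf F. \<forall>v. {w, v} \<in> F \<longrightarrow> v \<in> H"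
    and w: "w \<in> Lf F" and f: "f \<in> F" and wf: "w \<in> f"
  shows "\<exists>z. f = {w, z} \<and> z \<in> Sn F w"
proof -
  have fE: "f \<in> E" using f F by blast
  obtain z where z: "z \<noteq> w" "f = {w, z}" using card2_mem[OF edge_card[OF fE] wf] by blast
  have "z \<in> H" using noB w f z by blast
  moreover have "z \<in> f" using z by blast
  ultimately have "z \<in> S F" using f unfolding S_def by blast
  then have "z \<in> Sn F w" using fE z unfolding Sn_def by simp
  then show ?thesis using z by blast
qed


lemma case_c:
  assumes F: "F \<subseteq> E" and noB: "\<forall>w\<in>Lf F. \<forall>v. {w, v} \<in> F \<longrightarrow> v \<in> H"
    and uL: "u \<in> Lf F" and pS: "p \<in> S F" and e: "{u, p} \<in> F"
    and cp: "card (Sn F p - Lf F) \<le> 1"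
  shows "card {f\<in>F. f \<noteq> {u, p} \<and> conf {u, p} f} \<le> 4 * max_degree V E - 4"
proof -
  define D where "D = max_degree V E"
  have eE: "{u, p} \<in> E" using e F by blast
  have pu: "p \<in> nb u" "u \<in> nb p" using eE by (simp_all add: nb_iff insert_commute)
  have uS: "u \<in> S F" and cSu: "card (Sn F u) \<le> 1" using uL unfolding Lf_def by blast+
  have pSn: "p \<in> Sn F u" using pS eE unfolding Sn_def by simp
  have "degree E p \<ge> 3" using H_deg pS S_sub_H by blast
  then have D3: "D \<ge> 3" using deg_le[of p] unfolding D_def by linarith
  define a where "a = card (nb u - {p})"
  define b where "b = card (nb p - {u})"
  define c where "c = card ((nb p - {u}) \<inter> (S F - Lf F))"
  have a: "a \<le> D - 1" using card_nb_minus[OF pu(1)] deg_le[of u] unfolding a_def D_def by simp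
  have b: "b \<le> D - 1" using card_nb_minus[OF pu(2)] deg_le[of p] unfolding b_def D_def by simp
  have "(nb p - {u}) \<inter> (S F - Lf F) \<subseteq> Sn F p - Lf F" unfolding Sn_def by (auto simp: nb_iff)
  then have "c \<le> card (Sn F p - Lf F)" unfolding c_def by (rule card_mono[OF finite_Diff[OF Sn_fin]])
  then have c: "c \<le> 1" using cp by simp
  have s1: "(\<Sum>x\<in>nb u - {p}. card (Fx F x)) \<le> (\<Sum>x\<in>nb u - {p}. 1)"
  proof (rule sum_mono)
    fix x assume x: "x \<in> nb u - {p}"
    have ux: "{u, x} \<in> E" using x by (simp add: nb_iff)
    have xS: "x \<notin> S F"
    proof
      assume "x \<in> S F"
      then have "x \<in> Sn F u" using ux unfolding Sn_def by simp
      then have "x = p" using card_le1_eq[OF Sn_fin cSu _ pSn] by blast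
      then show False using x by blast
    qed
    show "card (Fx F x) \<le> 1"
    proof (cases "x \<in> H")
      case True then show ?thesis using Fx_empty[OF True xS] by simp
    next
      case xH: False
      have xu: "{x, u} \<in> E" using ux by (simp add: insert_commute)
      then have dx: "degree E x \<le> 2" using low xH by blast
      have nF: "{u, x} \<notin> F"
      proof
        assume "{u, x} \<in> F"
        then obtain z where z: "{u, x} = {u, z}" "z \<in> Sn F u" using Lf_edges[OF F noB uL] by blast
        have "x \<noteq> u" using edge_ne[OF ux] by simp
        then have "x = z" using z(1) by (metis doubleton_eq_iff)
        then show False using z(2) xS unfolding Sn_def by simp
      qed
      have "Fx F x \<subseteq> {f\<in>E. x \<in> f} - {{u, x}}" using F nF unfolding Fx_def by blast
      then have "card (Fx F x) \<le> card ({f\<in>E. x \<in> f} - {{u, x}})"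
        by (rule card_mono[rotated]) (use finE in simp)
      also have "\<dots> = degree E x - 1" unfolding degree_def
        by (rule card_Diff_singleton) (use ux in simp)
      finally show ?thesis using dx by simp
    qed
  qed
  also have "\<dots> = a" unfolding a_def by simp
  finally have s1: "(\<Sum>x\<in>nb u - {p}. card (Fx F x)) \<le> a" .
  have s2: "(\<Sum>x\<in>nb p - {u}. card (Fx F x)) \<le> 2 * b + (D - 2) * c"
    unfolding b_def c_def
  proof (rule sum_bound)
    show "finite (nb p - {u})" using nb_fin by simp
    fix x assume x: "x \<in> nb p - {u}"
    have px: "{p, x} \<in> E" using x by (simp add: nb_iff)
    show "card (Fx F x) \<le> 2 + (if x \<in> S F - Lf F then D - 2 else 0)"
    proof (cases "x \<in> S F - Lf F")
      case True
      have "card (Fx F x) \<le> D" using le_trans[OF Fx_card[OF F] deg_le] unfolding D_def .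
      then show ?thesis using True D3 by simp
    next
      case False
      show ?thesis
      proof (cases "x \<in> Lf F")
        case xL: True
        have cSx: "card (Sn F x) \<le> 1" using xL unfolding Lf_def by blast
        have pSx: "p \<in> Sn F x" using pS px unfolding Sn_def by (simp add: insert_commute)
        have "Fx F x \<subseteq> {{x, p}}"
        proof
          fix f assume "f \<in> Fx F x"
          then have "f \<in> F" "x \<in> f" unfolding Fx_def by blast+
          then obtain z where z: "f = {x, z}" "z \<in> Sn F x" using Lf_edges[OF F noB xL] by blast
          have "z = p" using card_le1_eq[OF Sn_fin cSx z(2) pSx] .
          then show "f \<in> {{x, p}}" using z by simp
        qed
        then have "card (Fx F x) \<le> card {{x, p}}" by (rule card_mono[rotated]) simp
        then show ?thesis by simp
      next
        case xL: False
        then have xS: "x \<notin> S F" using False by blast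
        show ?thesis
        proof (cases "x \<in> H")
          case True then show ?thesis using Fx_empty[OF True xS] by simp
        next
          case xH: False
          have "{x, p} \<in> E" using px by (simp add: insert_commute)
          then have "degree E x \<le> 2" using low xH by blast
          then show ?thesis using Fx_card[OF F, of x] by simp
        qed
      qed
    qed
  qed
  have m1: "(D - 2) * c \<le> D - 2" using c by (metis mult.right_neutral mult_le_mono2)
  have "a + (2 * b + (D - 2) * c) \<le> 4 * D - 4" using a b m1 D3 by linarith
  then show ?thesis using C_card[OF F eE] s1 s2 unfolding D_def by linarith
qed


lemma degen:
  assumes fo: "forest H (induced_edges E H)" and F: "F \<subseteq> E" and ne: "F \<noteq> {}"
  shows "\<exists>e\<in>F. card {f\<in>F. f \<noteq> e \<and> conf e f} \<le> 4 * max_degree V E - 4"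
proof (cases "\<exists>u v. {u, v} \<in> F \<and> u \<notin> H \<and> v \<notin> H")
  case True
  then obtain u v where "{u, v} \<in> F" "u \<notin> H" "v \<notin> H" by blast
  then show ?thesis using case_a[OF F] by blast
next
  case noA: False
  show ?thesis
  proof (cases "\<exists>u\<in>Lf F. \<exists>v. {u, v} \<in> F \<and> v \<notin> H")
    case True
    then obtain u v where "u \<in> Lf F" "{u, v} \<in> F" "v \<notin> H" by blast
    then show ?thesis using case_b[OF F] by blast
  next
    case False
    then have noB: "\<forall>w\<in>Lf F. \<forall>v. {w, v} \<in> F \<longrightarrow> v \<in> H" by blast
    have Sne: "S F \<noteq> {}"
    proof -
      obtain f where f: "f \<in> F" using ne by blast
      then have "card f = 2" using F edge_card by blast
      then obtain a b where ab: "f = {a, b}" by (auto simp: card_2_iff)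
      then have "a \<in> H \<or> b \<in> H" using noA f by blast
      then show ?thesis using f ab unfolding S_def by blast
    qed
    have "\<exists>u p. u \<in> Lf F \<and> p \<in> S F \<and> {u, p} \<in> F \<and> card (Sn F p - Lf F) \<le> 1"
    proof (cases "S F - Lf F = {}")
      case True
      obtain u where uS: "u \<in> S F" using Sne by blast
      then have uL: "u \<in> Lf F" using True by blast
      obtain f where f: "f \<in> F" "u \<in> f" using uS unfolding S_def by blast
      obtain z where z: "f = {u, z}" "z \<in> Sn F u" using Lf_edges[OF F noB uL f] by blast
      have zS: "z \<in> S F" using z unfolding Sn_def by blast
      have h0: "Sn F z - Lf F = {}" using True unfolding Sn_def by blast
      have c0: "card (Sn F z - Lf F) \<le> 1" unfolding h0 by simp
      have "{u, z} \<in> F" using z(1) f(1) by simp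
      then show ?thesis using uL zS c0 by blast
    next
      case False
      define W where "W = S F - Lf F"
      have WH: "W \<subseteq> H" using S_sub_H unfolding W_def by blast
      have finW: "finite W" using finite_subset[OF _ finV] WH H_sub_V by blast
      have foW: "forest W (induced_edges E W)" using forest_sub[OF WH fo] .
      obtain p where pW: "p \<in> W" and cp: "card {y\<in>W. {p, y} \<in> E} \<le> 1"
        using forest_leaf[OF finW _ foW] False unfolding W_def by blast
      have eqS: "Sn F p - Lf F = {y\<in>W. {p, y} \<in> E}" unfolding Sn_def W_def by blast
      have pS: "p \<in> S F" and pL: "p \<notin> Lf F" using pW unfolding W_def by blast+
      have cSp: "\<not> card (Sn F p) \<le> 1" using pS pL unfolding Lf_def by blast
      have "Sn F p \<inter> Lf F \<noteq> {}"
      proof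
        assume "Sn F p \<inter> Lf F = {}"
        then have "Sn F p \<subseteq> Sn F p - Lf F" by blast
        then have "card (Sn F p) \<le> card (Sn F p - Lf F)" by (rule card_mono[OF finite_Diff[OF Sn_fin]])
        then show False using cp cSp eqS by simp
      qed
      then obtain u where uSn: "u \<in> Sn F p" and uL: "u \<in> Lf F" by blast
      have uS: "u \<in> S F" and cSu: "card (Sn F u) \<le> 1" using uL unfolding Lf_def by blast+
      obtain f where f: "f \<in> F" "u \<in> f" using uS unfolding S_def by blast
      obtain z where z: "f = {u, z}" "z \<in> Sn F u" using Lf_edges[OF F noB uL f] by blast
      have "{p, u} \<in> E" using uSn unfolding Sn_def by blast
      then have "p \<in> Sn F u" using pS unfolding Sn_def by (simp add: insert_commute)
      then have "z = p" using card_le1_eq[OF Sn_fin cSu z(2)] by blast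
      then have "{u, p} \<in> F" using z(1) f(1) by simp
      moreover have "card (Sn F p - Lf F) \<le> 1" using cp eqS by simp
      ultimately show ?thesis using uL pS by blast
    qed
    then obtain u p where "u \<in> Lf F" "p \<in> S F" "{u, p} \<in> F" "card (Sn F p - Lf F) \<le> 1" by blast
    then show ?thesis using case_c[OF F noB] by blast
  qed
qed

lemma conf_sym: "conf e f \<Longrightarrow> conf f e"
proof -
  assume "conf e f"
  then consider "e \<inter> f \<noteq> {}" | u w where "u \<in> e" "w \<in> f" "{u, w} \<in> E" unfolding conf_def by blast
  then show "conf f e"
  proof cases
    case 1 then show ?thesis unfolding conf_def by blast
  next
    case 2
    then have "{w, u} \<in> E" by (simp add: insert_commute)
    then show ?thesis using 2 unfolding conf_def by blast
  qed
qed

end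

lemma greedy:
  fixes R :: "'b \<Rightarrow> 'b \<Rightarrow> bool"
  assumes sym: "\<And>e f. R e f \<Longrightarrow> R f e"
    and dg: "\<And>F. F \<subseteq> F0 \<Longrightarrow> F \<noteq> {} \<Longrightarrow> \<exists>e\<in>F. card {f\<in>F. f \<noteq> e \<and> R e f} < k"
  shows "finite F \<Longrightarrow> F \<subseteq> F0 \<Longrightarrow> \<exists>c::'b \<Rightarrow> nat. (\<forall>e\<in>F. c e < k) \<and> (\<forall>e\<in>F. \<forall>f\<in>F. e \<noteq> f \<and> R e f \<longrightarrow> c e \<noteq> c f)"
proof (induction F rule: finite_psubset_induct)
  case (psubset F)
  show ?case
  proof (cases "F = {}")
    case True then show ?thesis by simp
  next
    case False
    obtain e where eF: "e \<in> F" and ce: "card {f\<in>F. f \<noteq> e \<and> R e f} < k" using dg[OF psubset.prems False] by blast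
    have ps: "F - {e} \<subset> F" using eF by blast
    have ps2: "F - {e} \<subseteq> F0" using psubset.prems by blast
    obtain c where c1: "\<forall>x\<in>F - {e}. c x < k"
      and c2: "\<forall>x\<in>F - {e}. \<forall>y\<in>F - {e}. x \<noteq> y \<and> R x y \<longrightarrow> c x \<noteq> c y"
      using psubset.IH[OF ps ps2] by blast
    define U where "U = c ` {f\<in>F. f \<noteq> e \<and> R e f}"
    have "card U \<le> card {f\<in>F. f \<noteq> e \<and> R e f}" unfolding U_def
      by (rule card_image_le) (use psubset.hyps in simp)
    then have "card U < card {..<k}" using ce by simp
    have finU: "finite U" unfolding U_def using psubset.hyps by simp
    have "\<not> {..<k} \<subseteq> U"
    proof
      assume "{..<k} \<subseteq> U"
      then have "card {..<k} \<le> card U" by (rule card_mono[OF finU])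
      with \<open>card U < card {..<k}\<close> show False by simp
    qed
    then obtain col where col: "col < k" "col \<notin> U" by blast
    define c' where "c' = c(e := col)"
    have "\<forall>x\<in>F. c' x < k" using c1 col unfolding c'_def by simp
    moreover have "\<forall>x\<in>F. \<forall>y\<in>F. x \<noteq> y \<and> R x y \<longrightarrow> c' x \<noteq> c' y"
    proof (intro ballI impI)
      fix x y assume xy: "x \<in> F" "y \<in> F" "x \<noteq> y \<and> R x y"
      show "c' x \<noteq> c' y"
      proof (cases "x = e")
        case True
        then have "c y \<in> U" using xy unfolding U_def by blast
        then show ?thesis using True xy col unfolding c'_def by auto
      next
        case xe: False
        show ?thesis
        proof (cases "y = e")
          case True
          then have "R e x" using xy sym by blast
          then have "c x \<in> U" using xy xe unfolding U_def by blast
          then show ?thesis using True xe col unfolding c'_def by auto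
        next
          case False
          then show ?thesis using xe xy c2 unfolding c'_def by simp
        qed
      qed
    qed
    ultimately show ?thesis by blast
  qed
qed

theorem theorem4:
  fixes V :: "'a set" and E :: "'a set set"
  assumes "simple_graph V E"
    and "E \<noteq> {}"
    and "forest {v\<in>V. degree E v \<ge> 3} (induced_edges E {v\<in>V. degree E v \<ge> 3})"
  shows "strong_chromatic_index E \<le> 4 * max_degree V E - 3"
proof -
  interpret sg V E using assms(1) by unfold_locales
  define D where "D = max_degree V E"
  have fo: "forest H (induced_edges E H)" using assms(3) unfolding H_def .
  obtain e where eE: "e \<in> E" using assms(2) by blast
  obtain u where ue: "u \<in> e" using edge_card[OF eE] by (metis card.empty ex_in_conv zero_neq_numeral)
  have "1 \<le> card {f\<in>E. u \<in> f}"
  proof -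
    have "{e} \<subseteq> {f\<in>E. u \<in> f}" using eE ue by blast
    then have "card {e} \<le> card {f\<in>E. u \<in> f}" by (rule card_mono[rotated]) (use finE in simp)
    then show ?thesis by simp
  qed
  then have D1: "D \<ge> 1" using deg_le[of u] unfolding degree_def D_def by linarith
  have dg: "\<And>F. F \<subseteq> E \<Longrightarrow> F \<noteq> {} \<Longrightarrow> \<exists>e\<in>F. card {f\<in>F. f \<noteq> e \<and> conf e f} < 4 * D - 3"
  proof -
    fix F assume "F \<subseteq> E" "F \<noteq> {}"
    then obtain e where "e \<in> F" "card {f\<in>F. f \<noteq> e \<and> conf e f} \<le> 4 * D - 4"
      using degen[OF fo] unfolding D_def by blast
    then show "\<exists>e\<in>F. card {f\<in>F. f \<noteq> e \<and> conf e f} < 4 * D - 3" using D1 by (intro bexI[of _ e]) simp_all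
  qed
  obtain c :: "'a set \<Rightarrow> nat" where c1: "\<forall>e\<in>E. c e < 4 * D - 3"
    and c2: "\<forall>e\<in>E. \<forall>f\<in>E. e \<noteq> f \<and> conf e f \<longrightarrow> c e \<noteq> c f"
    using greedy[of conf E "4 * D - 3", OF conf_sym dg finE] by blast
  have sec: "strong_edge_coloring E c" unfolding strong_edge_coloring_def
    using c2 unfolding conf_def by blast
  have "c ` E \<subseteq> {..<4 * D - 3}" using c1 by blast
  then have cc: "card (c ` E) \<le> 4 * D - 3" using card_mono[of "{..<4 * D - 3}" "c ` E"] by simp
  have "strong_chromatic_index E \<le> card (c ` E)" unfolding strong_chromatic_index_def
    by (rule Least_le) (use sec in blast)
  then show ?thesis using cc unfolding D_def by simp
qed
end
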